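(* Let $G=(V,E)$ be a graph on $n$ vertices with minimum degree $m$, where $m\to\infty$ as $n\to\infty$. Consider the following depth-first exploration. Vertices are partitioned into sets $S,U,T$, initially $S=U=\emptyset$, $T=V$; $U$ is a stack. Each step: if $U$ is empty, move some vertex of $T$ to the top of $U$ (a restart). Let $u$ be the top vertex of $U$; if $u$ has already made $k$ choices, move $u$ from $U$ to $S$ and continue with the new top of $U$. Otherwise $u$ makes one new choice: a vertex $v$ chosen uniformly at random from the $G$-neighborhood of $u$, independently of everything else; this choice counts as one step. If $v\in T$ (a hit), $v$ is moved from $T$ to the top of $U$. Then for every (sufficiently small) $\varepsilon>0$ and every sufficiently large constant $k$ (depending on $\varepsilon$), with high probability, after $\varepsilon k m$ choices have been made in total, the number of hits is at least $(1-\varepsilon)m$.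
   Context: "With high probability" means with probability tending to $1$ as $n\to\infty$. Each vertex makes at most $k$ choices in total during the exploration. *)

theory Defs
  imports "HOL-Probability.Probability"
begin

text \<open>S = explored vertices, U = stack
 (head = top), T = untouched vertices, nch v = number of choices made so far by v,
 tot = total number of choices made, hits = number of hits so far.\<close>

record dfs_state =
  Sset :: "nat set"
  Ustack :: "nat list"
  Tset :: "nat set"
  nch :: "nat \<Rightarrow> nat"
  tot :: nat
  hits :: nat

definition dfs_init :: "nat \<Rightarrow> dfs_state" where
  "dfs_init n = \<lparr>Sset = {}, Ustack = [], Tset = {..<n}, nch = (\<lambda>_. 0), tot = 0, hits = 0\<rparr>"

definition dfs_step ::
  "(nat \<Rightarrow> nat \<Rightarrow> bool) \<Rightarrow> nat \<Rightarrow> nat \<Rightarrow> (dfs_state \<Rightarrow> nat) \<Rightarrow> dfs_state \<Rightarrow> dfs_state pmf" where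
  "dfs_step E k t r st =
    (if t \<le> tot st then return_pmf st
     else (case Ustack st of
       [] \<Rightarrow> (if Tset st = {} then return_pmf st
              else return_pmf (st\<lparr>Ustack := [r st], Tset := Tset st - {r st}\<rparr>))
     | u # us \<Rightarrow>
         (if k \<le> nch st u then return_pmf (st\<lparr>Ustack := us, Sset := insert u (Sset st)\<rparr>)
          else map_pmf
            (\<lambda>v. let st' = st\<lparr>nch := (nch st)(u := nch st u + 1), tot := tot st + 1\<rparr>
                 in if v \<in> Tset st
                    then st'\<lparr>Ustack := v # u # us, Tset := Tset st - {v}, hits := hits st + 1\<rparr>
                    else st')
            (pmf_of_set {v. E u v}))))"

text \<open>With N = t + 2n + 1 the process has certainly reached the moment
 at which exactly t choices have been made (at most n restarts and n pops occur).\<close>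

definition dfs_run ::
  "(nat \<Rightarrow> nat \<Rightarrow> bool) \<Rightarrow> nat \<Rightarrow> nat \<Rightarrow> nat \<Rightarrow> (dfs_state \<Rightarrow> nat) \<Rightarrow> nat \<Rightarrow> dfs_state pmf" where
  "dfs_run E n k t r N = ((\<lambda>p. bind_pmf p (dfs_step E k t r)) ^^ N) (return_pmf (dfs_init n))"

definition min_degree :: "(nat \<Rightarrow> nat \<Rightarrow> bool) \<Rightarrow> nat \<Rightarrow> nat" where
  "min_degree E n = Min ((\<lambda>v. card {u. E v u}) ` {..<n})"

definition simple_graph_on :: "nat \<Rightarrow> (nat \<Rightarrow> nat \<Rightarrow> bool) \<Rightarrow> bool" where
  "simple_graph_on n E \<longleftrightarrow> (\<forall>u v. E u v \<longrightarrow> u < n \<and> v < n \<and> u \<noteq> v \<and> E v u)"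

end

theory Submission
  imports Defs
begin


lemma iter_support_inv:
  assumes step: "\<And>j st st'. I j st \<Longrightarrow> st' \<in> set_pmf (s st) \<Longrightarrow> I (Suc j) st'"
    and init: "\<And>st. st \<in> set_pmf p0 \<Longrightarrow> I 0 st"
  shows "st \<in> set_pmf (((\<lambda>p. bind_pmf p s) ^^ j) p0) \<Longrightarrow> I j st"
proof (induction j arbitrary: st)
  case 0 then show ?case using init by simp
next
  case (Suc j) then show ?case using step by auto
qed

lemma iter_super:
  assumes "\<And>j st. st \<in> set_pmf (((\<lambda>p. bind_pmf p s) ^^ j) p0) \<Longrightarrow> (\<integral>\<^sup>+x. f x \<partial>s st) \<le> f st"
  shows "(\<integral>\<^sup>+x. f x \<partial>(((\<lambda>p. bind_pmf p s) ^^ j) p0)) \<le> (\<integral>\<^sup>+x. f x \<partial>p0)"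
proof (induction j)
  case 0 then show ?case by simp
next
  case (Suc j)
  have "(\<integral>\<^sup>+x. f x \<partial>(((\<lambda>p. bind_pmf p s) ^^ Suc j) p0))
      = (\<integral>\<^sup>+y. (\<integral>\<^sup>+x. f x \<partial>s y) \<partial>(((\<lambda>p. bind_pmf p s) ^^ j) p0))" by simp
  also have "\<dots> \<le> (\<integral>\<^sup>+y. f y \<partial>(((\<lambda>p. bind_pmf p s) ^^ j) p0))"
    by (rule nn_integral_mono_AE) (auto simp: AE_measure_pmf_iff assms)
  finally show ?case using Suc by simp
qed

lemma pmf_markov:
  fixes f :: "'a \<Rightarrow> ennreal"
  assumes "0 < C" "C < \<top>"
  shows "emeasure (measure_pmf p) {x. C \<le> f x} \<le> (\<integral>\<^sup>+x. f x \<partial>p) / C"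
proof -
  have "C * emeasure (measure_pmf p) {x. C \<le> f x} = (\<integral>\<^sup>+x. C * indicator {x. C \<le> f x} x \<partial>p)"
    by (subst nn_integral_cmult_indicator) auto
  also have "\<dots> \<le> (\<integral>\<^sup>+x. f x \<partial>p)"
    by (rule nn_integral_mono) (auto split: split_indicator)
  finally have "emeasure (measure_pmf p) {x. C \<le> f x} * C \<le> (\<integral>\<^sup>+x. f x \<partial>p)"
    by (simp add: mult.commute)
  then have "emeasure (measure_pmf p) {x. C \<le> f x} * C / C \<le> (\<integral>\<^sup>+x. f x \<partial>p) / C"
    by (rule divide_right_mono_ennreal)
  then show ?thesis using assms by (simp add: mult_divide_eq_ennreal)
qed




lemma sum_upd_Suc:
  fixes f :: "nat \<Rightarrow> nat"
  assumes "u \<in> A" "finite A"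
  shows "(\<Sum>v\<in>A. (f(u := f u + 1)) v) = (\<Sum>v\<in>A. f v) + 1"
proof -
  have "(\<Sum>v\<in>A. (f(u := f u + 1)) v) = (f u + 1) + (\<Sum>v\<in>A-{u}. (f(u := f u + 1)) v)"
    using assms by (simp add: sum.remove)
  also have "(\<Sum>v\<in>A-{u}. (f(u := f u + 1)) v) = (\<Sum>v\<in>A-{u}. f v)"
    by (rule sum.cong) auto
  also have "(f u + 1) + (\<Sum>v\<in>A-{u}. f v) = (\<Sum>v\<in>A. f v) + 1"
    using assms by (simp add: sum.remove)
  finally show ?thesis .
qed

definition inv :: "nat \<Rightarrow> nat \<Rightarrow> nat \<Rightarrow> dfs_state \<Rightarrow> bool" where
  "inv n k t st \<longleftrightarrow> Tset st \<subseteq> {..<n} \<and> set (Ustack st) \<subseteq> {..<n} \<and> Sset st \<subseteq> {..<n}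
     \<and> {..<n} - Tset st \<subseteq> Sset st \<union> set (Ustack st) \<and> (\<forall>v\<in>Sset st. k \<le> nch st v)
     \<and> (\<Sum>v<n. nch st v) = tot st \<and> hits st + card (Tset st) \<le> n
     \<and> length (Ustack st) + card (Tset st) \<le> n \<and> tot st \<le> t"

definition prog :: "nat \<Rightarrow> dfs_state \<Rightarrow> nat" where
  "prog n st = tot st + (n - card (Tset st)) + (n - card (Tset st) - length (Ustack st))"

definition term_st :: "nat \<Rightarrow> dfs_state \<Rightarrow> bool" where
  "term_st t st \<longleftrightarrow> t \<le> tot st \<or> (Ustack st = [] \<and> Tset st = {})"

locale dfs =
  fixes n :: nat and E :: "nat \<Rightarrow> nat \<Rightarrow> bool" and k t :: nat and r :: "dfs_state \<Rightarrow> nat"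
  assumes graph: "simple_graph_on n E"
    and nbr_ne: "\<And>u. u < n \<Longrightarrow> {v. E u v} \<noteq> {}"
    and rr: "\<And>st. Tset st \<noteq> {} \<Longrightarrow> r st \<in> Tset st"
begin

lemma nbr_sub: "{v. E u v} \<subseteq> {..<n}"
  using graph unfolding simple_graph_on_def by auto

lemma nbr_fin: "finite {v. E u v}"
  using nbr_sub finite_subset by blast

lemma init_inv: "inv n k t (dfs_init n)"
  unfolding inv_def dfs_init_def by auto

lemma step_inv:
  assumes I: "inv n k t st" and st': "st' \<in> set_pmf (dfs_step E k t r st)"
  shows "inv n k t st' \<and> (term_st t st \<longrightarrow> st' = st) \<and> (\<not> term_st t st \<longrightarrow> prog n st < prog n st')"
proof (cases "t \<le> tot st")
  case True
  then show ?thesis using I st' by (simp add: dfs_step_def term_st_def)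
next
  case tl: False
  have finT: "finite (Tset st)" using I finite_subset unfolding inv_def by blast
  show ?thesis
  proof (cases "Ustack st")
    case Nil
    show ?thesis
    proof (cases "Tset st = {}")
      case True
      then show ?thesis using I st' tl Nil by (simp add: dfs_step_def term_st_def)
    next
      case False
      have rin: "r st \<in> Tset st" using rr False .
      have st'eq: "st' = st\<lparr>Ustack := [r st], Tset := Tset st - {r st}\<rparr>"
        using st' tl Nil False by (simp add: dfs_step_def)
      have c: "card (Tset st - {r st}) = card (Tset st) - 1" using rin finT by simp
      have c1: "card (Tset st) \<ge> 1" using rin finT card_0_eq by fastforce
      show ?thesis using I Nil False tl rin c c1 unfolding st'eq inv_def term_st_def prog_def
        by auto
    qed
  next
    case (Cons u us)
    show ?thesis
    proof (cases "k \<le> nch st u")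
      case True
      have st'eq: "st' = st\<lparr>Ustack := us, Sset := insert u (Sset st)\<rparr>"
        using st' tl Cons True by (simp add: dfs_step_def)
      show ?thesis using I Cons True tl unfolding st'eq inv_def term_st_def prog_def
        by auto
    next
      case False
      have un: "u < n" using I Cons unfolding inv_def by auto
      obtain v where Ev: "E u v" and
        st'eq: "st' = (if v \<in> Tset st
           then st\<lparr>nch := (nch st)(u := nch st u + 1), tot := tot st + 1,
                   Ustack := v # u # us, Tset := Tset st - {v}, hits := hits st + 1\<rparr>
           else st\<lparr>nch := (nch st)(u := nch st u + 1), tot := tot st + 1\<rparr>)"
        using st' tl Cons False nbr_fin nbr_ne[OF un] by (auto simp: dfs_step_def Let_def)
      have sumU: "(\<Sum>v<n. ((nch st)(u := nch st u + 1)) v) = (\<Sum>v<n. nch st v) + 1"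
        using un by (intro sum_upd_Suc) auto
      have vn: "v < n" using Ev nbr_sub by auto
      show ?thesis
      proof (cases "v \<in> Tset st")
        case True
        have c: "card (Tset st - {v}) = card (Tset st) - 1" using True finT by simp
        have c1: "card (Tset st) \<ge> 1" using True finT card_0_eq by fastforce
        show ?thesis using I Cons False tl True c c1 sumU vn unfolding st'eq inv_def term_st_def prog_def
          by auto
      next
        case nT: False
        show ?thesis using I Cons False tl nT sumU unfolding st'eq inv_def term_st_def prog_def
          by auto
      qed
    qed
  qed
qed

lemma step_super:
  fixes F :: "nat \<Rightarrow> nat \<Rightarrow> nat \<Rightarrow> real"
  assumes I: "inv n k t st" and Fnn: "\<And>a b c. 0 \<le> F a b c"
    and restart: "tot st < t \<Longrightarrow> Ustack st = [] \<Longrightarrow> Tset st \<noteq> {} \<Longrightarrow>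
        F (tot st) (hits st) (card (Tset st) - 1) \<le> F (tot st) (hits st) (card (Tset st))"
    and choice: "\<And>u us. tot st < t \<Longrightarrow> Ustack st = u # us \<Longrightarrow> nch st u < k \<Longrightarrow>
        real (card ({v. E u v} \<inter> Tset st)) * F (tot st + 1) (hits st + 1) (card (Tset st) - 1)
        + real (card ({v. E u v} - Tset st)) * F (tot st + 1) (hits st) (card (Tset st))
        \<le> real (card {v. E u v}) * F (tot st) (hits st) (card (Tset st))"
  shows "(\<integral>\<^sup>+x. ennreal (F (tot x) (hits x) (card (Tset x))) \<partial>dfs_step E k t r st)
         \<le> ennreal (F (tot st) (hits st) (card (Tset st)))"
proof (cases "t \<le> tot st")
  case True
  then show ?thesis by (simp add: dfs_step_def Fnn)
next
  case tl: False
  have finT: "finite (Tset st)" using I finite_subset unfolding inv_def by blast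
  show ?thesis
  proof (cases "Ustack st")
    case Nil
    show ?thesis
    proof (cases "Tset st = {}")
      case True
      then show ?thesis using tl Nil by (simp add: dfs_step_def Fnn)
    next
      case False
      have rin: "r st \<in> Tset st" using rr False .
      have c: "card (Tset st - {r st}) = card (Tset st) - 1" using rin finT by simp
      show ?thesis using tl Nil False c restart by (simp add: dfs_step_def Fnn ennreal_leI)
    qed
  next
    case (Cons u us)
    show ?thesis
    proof (cases "k \<le> nch st u")
      case True
      then show ?thesis using tl Cons by (simp add: dfs_step_def Fnn)
    next
      case False
      have un: "u < n" using I Cons unfolding inv_def by auto
      define A where "A = {v. E u v}"
      have finA: "finite A" and neA: "A \<noteq> {}" using nbr_fin nbr_ne[OF un] by (auto simp: A_def)
      define G where "G = (\<lambda>v. F (tot st + 1) (if v \<in> Tset st then hits st + 1 else hits st)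
                          (if v \<in> Tset st then card (Tset st) - 1 else card (Tset st)))"
      have eq1: "(\<integral>\<^sup>+x. ennreal (F (tot x) (hits x) (card (Tset x))) \<partial>dfs_step E k t r st)
          = (\<integral>\<^sup>+v. ennreal (G v) \<partial>pmf_of_set A)"
        using tl Cons False finT
        by (auto simp: dfs_step_def Let_def A_def G_def intro!: nn_integral_cong)
      also have "\<dots> = (\<Sum>v\<in>A. ennreal (G v)) / of_nat (card A)"
        using finA neA by (simp add: nn_integral_pmf_of_set)
      also have "\<dots> = ennreal (sum G A) / ennreal (real (card A))"
        using Fnn by (simp add: G_def ennreal_of_nat_eq_real_of_nat)
      also have "\<dots> = ennreal (sum G A / real (card A))"
        using finA neA Fnn by (intro divide_ennreal) (auto simp: G_def sum_nonneg card_gt_0_iff)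
      also have "\<dots> \<le> ennreal (F (tot st) (hits st) (card (Tset st)))"
      proof (rule ennreal_leI)
        have "sum G A = sum G (A \<inter> Tset st) + sum G (A - Tset st)"
          using finA by (simp add: sum.Int_Diff)
        also have "sum G (A \<inter> Tset st) = real (card (A \<inter> Tset st)) * F (tot st + 1) (hits st + 1) (card (Tset st) - 1)"
          by (simp add: G_def)
        also have "sum G (A - Tset st) = real (card (A - Tset st)) * F (tot st + 1) (hits st) (card (Tset st))"
          by (simp add: G_def)
        finally have "sum G A \<le> real (card A) * F (tot st) (hits st) (card (Tset st))"
          using choice[OF _ Cons] tl False by (simp add: A_def)
        then show "sum G A / real (card A) \<le> F (tot st) (hits st) (card (Tset st))"
          using finA neA by (simp add: divide_le_eq card_gt_0_iff mult.commute)
      qed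
      finally show ?thesis .
    qed
  qed
qed

lemma run_support:
  assumes "st \<in> set_pmf (dfs_run E n k t r N)"
  shows "inv n k t st \<and> (N \<le> prog n st \<or> term_st t st)"
proof -
  have "\<And>j st st'. inv n k t st \<and> (j \<le> prog n st \<or> term_st t st) \<Longrightarrow> st' \<in> set_pmf (dfs_step E k t r st)
     \<Longrightarrow> inv n k t st' \<and> (Suc j \<le> prog n st' \<or> term_st t st')"
  proof -
    fix j st st'
    assume a: "inv n k t st \<and> (j \<le> prog n st \<or> term_st t st)" "st' \<in> set_pmf (dfs_step E k t r st)"
    then show "inv n k t st' \<and> (Suc j \<le> prog n st' \<or> term_st t st')"
      using step_inv[of st st'] by (cases "term_st t st") auto
  qed
  note stp = this
  have init': "\<And>s. s \<in> set_pmf (return_pmf (dfs_init n)) \<Longrightarrow> inv n k t s \<and> (0 \<le> prog n s \<or> term_st t s)"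
    using init_inv by simp
  have mem: "st \<in> set_pmf (((\<lambda>p. bind_pmf p (dfs_step E k t r)) ^^ N) (return_pmf (dfs_init n)))"
    using assms unfolding dfs_run_def .
  show ?thesis
    by (rule iter_support_inv[where I = "\<lambda>j st. inv n k t st \<and> (j \<le> prog n st \<or> term_st t st)", OF stp init' mem])
qed

lemma run_final:
  assumes "st \<in> set_pmf (dfs_run E n k t r (t + 2 * n + 1))"
  shows "inv n k t st \<and> term_st t st"
proof -
  from run_support[OF assms] have I: "inv n k t st" and d: "t + 2*n + 1 \<le> prog n st \<or> term_st t st" by auto
  have "prog n st \<le> t + 2 * n" using I unfolding inv_def prog_def by auto
  then show ?thesis using I d by auto
qed

end



lemma phi_ineq:
  fixes x y e a :: real
  assumes x: "0 \<le> x" and y: "0 \<le> y" and e: "0 < e" "e \<le> 1" and xe: "e / 2 * (x + y) \<le> x"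
  shows "x * exp (e/4 * (a + 1) - 1) + y * exp (e/4 * (a + 1)) \<le> (x + y) * exp (e/4 * a)"
proof -
  have e1: "exp (-1) \<le> (1/2::real)"
  proof -
    have "2 \<le> exp (1::real)" using exp_ge_add_one_self[of 1] by simp
    then show ?thesis by (simp add: exp_minus field_simps)
  qed
  have "x * exp (-1) \<le> x * (1/2)" using mult_left_mono[OF e1 x] .
  then have "x * exp (-1) + y \<le> x / 2 + y" by simp
  also have "\<dots> \<le> (x + y) * (1 - e/4)"
  proof -
    have "(x + y) * (1 - e/4) = x + y - (e / 2 * (x + y)) / 2" by (simp add: algebra_simps)
    then show ?thesis using xe by linarith
  qed
  also have "\<dots> \<le> (x + y) * exp (- (e/4))"
    using exp_ge_add_one_self[of "-(e/4)"] x y by (intro mult_left_mono) auto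
  finally have main: "x * exp (-1) + y \<le> (x + y) * exp (- (e/4))" .
  have "x * exp (e/4 * (a + 1) - 1) + y * exp (e/4 * (a + 1))
      = exp (e/4 * (a + 1)) * (x * exp (-1) + y)"
  proof -
    have "exp (e/4 * (a + 1) - 1) = exp (e/4 * (a + 1)) * exp (-1)"
      by (simp add: exp_add[symmetric])
    then show ?thesis by (simp add: algebra_simps)
  qed
  also have "\<dots> \<le> exp (e/4 * (a + 1)) * ((x + y) * exp (- (e/4)))"
    using main by (intro mult_left_mono) auto
  also have "\<dots> = (x + y) * exp (e/4 * a)"
  proof -
    have "exp (e/4 * (a + 1)) * exp (- (e/4)) = exp (e/4 * a)"
      by (simp add: exp_add[symmetric] algebra_simps)
    then show ?thesis by (metis mult.commute mult.left_commute)
  qed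
  finally show ?thesis .
qed

lemma psi_ineq:
  fixes x y z :: real
  assumes x: "0 \<le> x" and y: "0 \<le> y" and xy: "4 * y \<le> x + y"
  shows "x * 2 powr (z - 1) + y * 2 powr (z + 1) \<le> (x + y) * 2 powr z"
proof -
  have "x * 2 powr (z - 1) + y * 2 powr (z + 1) = 2 powr z * (x / 2 + 2 * y)"
    by (simp add: powr_diff powr_add algebra_simps)
  also have "\<dots> \<le> 2 powr z * (x + y)" using xy y by (intro mult_left_mono) auto
  finally show ?thesis by (simp add: mult.commute)
qed




context dfs begin

lemma inv_cardT: "inv n k t st \<Longrightarrow> finite (Tset st) \<and> card (Tset st) \<le> n
   \<and> card ({..<n} - Tset st) = n - card (Tset st) \<and> hits st \<le> n - card (Tset st)"
  unfolding inv_def by (auto simp: card_Diff_subset finite_subset card_mono[of "{..<n}", simplified])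

lemma inv_kS: "inv n k t st \<Longrightarrow> k * card (Sset st) \<le> tot st"
proof -
  assume I: "inv n k t st"
  have fS: "finite (Sset st)" using I finite_subset unfolding inv_def by blast
  have "k * card (Sset st) = (\<Sum>v\<in>Sset st. k)" by simp
  also have "\<dots> \<le> (\<Sum>v\<in>Sset st. nch st v)" using I unfolding inv_def by (intro sum_mono) auto
  also have "\<dots> \<le> (\<Sum>v<n. nch st v)" using I unfolding inv_def by (intro sum_mono2) auto
  also have "\<dots> = tot st" using I unfolding inv_def by simp
  finally show ?thesis .
qed

lemma inv_tauS: "inv n k t st \<Longrightarrow> Ustack st = [] \<Longrightarrow> n - card (Tset st) \<le> card (Sset st)"
proof -
  assume I: "inv n k t st" and U: "Ustack st = []"
  have "{..<n} - Tset st \<subseteq> Sset st" using I U unfolding inv_def by auto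
  moreover have "finite (Sset st)" using I finite_subset unfolding inv_def by blast
  ultimately have "card ({..<n} - Tset st) \<le> card (Sset st)" by (rule card_mono[rotated])
  then show ?thesis using inv_cardT[OF I] by simp
qed

lemma inv_miss: "inv n k t st \<Longrightarrow> card ({v. E u v} - Tset st) \<le> n - card (Tset st)"
proof -
  assume I: "inv n k t st"
  have "{v. E u v} - Tset st \<subseteq> {..<n} - Tset st" using nbr_sub by auto
  then have "card ({v. E u v} - Tset st) \<le> card ({..<n} - Tset st)" by (intro card_mono) auto
  then show ?thesis using inv_cardT[OF I] by simp
qed

lemma split_card: "card ({v. E u v} \<inter> Tset st) + card ({v. E u v} - Tset st) = card {v. E u v}"
  using nbr_fin by (metis card_Int_Diff)

end

locale dfs2 = dfs +
  fixes m :: nat and e :: real and R0 :: nat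
  assumes mdeg: "\<And>u. u < n \<Longrightarrow> m \<le> card {v. E u v}"
    and m8: "8 \<le> m" and e0: "0 < e" and e8: "e \<le> 1/8"
    and tdef: "t = nat \<lceil>e * real k * real m\<rceil>"
    and k3: "3 \<le> k" and ek: "8 \<le> e * e * real k"
    and R0pos: "1 \<le> R0" and R0le: "real R0 \<le> e * real m / 2"
begin

definition F1 :: "nat \<Rightarrow> nat \<Rightarrow> nat \<Rightarrow> real" where
  "F1 c h ct = (if (1 - e) * real m \<le> real h \<or> R0 \<le> (n - ct) - h then 0 else exp (e/4 * real c - real h))"

definition Cst :: real where "Cst = 2 powr (real (k - 2) * real (R0 - 1))"

definition F2 :: "nat \<Rightarrow> nat \<Rightarrow> nat \<Rightarrow> real" where
  "F2 c h ct = (if R0 \<le> (n - ct) - h then Cst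
     else if 4 * (n - ct) \<le> m then 2 powr (real c - 2 * real h) else 0)"

lemma tot_lt: "tot st < t \<Longrightarrow> real (tot st) < e * real k * real m"
  using tdef by linarith

lemma F1_nn: "0 \<le> F1 a b c" by (simp add: F1_def)

lemma F1_le: "F1 a b c \<le> exp (e/4 * real a - real b)" by (simp add: F1_def)

lemma F1_super:
  assumes I: "inv n k t st"
  shows "(\<integral>\<^sup>+x. ennreal (F1 (tot x) (hits x) (card (Tset x))) \<partial>dfs_step E k t r st)
         \<le> ennreal (F1 (tot st) (hits st) (card (Tset st)))"
proof (rule step_super[OF I F1_nn])
  have ct: "finite (Tset st)" "card (Tset st) \<le> n" "hits st \<le> n - card (Tset st)"
    using inv_cardT[OF I] by auto
  show "F1 (tot st) (hits st) (card (Tset st) - 1) \<le> F1 (tot st) (hits st) (card (Tset st))"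
    if "Tset st \<noteq> {}"
  proof -
    have "card (Tset st) \<ge> 1" using that ct card_0_eq by fastforce
    then show ?thesis using ct unfolding F1_def by auto
  qed
  fix u us assume tl: "tot st < t" and U: "Ustack st = u # us" and nk: "nch st u < k"
  have un: "u < n" using I U unfolding inv_def by auto
  define x where "x = card ({v. E u v} \<inter> Tset st)"
  define y where "y = card ({v. E u v} - Tset st)"
  have xy: "x + y = card {v. E u v}" using split_card by (simp add: x_def y_def)
  have ytau: "y \<le> n - card (Tset st)" using inv_miss[OF I] by (simp add: y_def)
  have Am: "m \<le> x + y" using xy mdeg[OF un] by simp
  let ?c = "tot st" and ?h = "hits st" and ?ct = "card (Tset st)"
  have goal: "real x * F1 (?c + 1) (?h + 1) (?ct - 1) + real y * F1 (?c + 1) ?h ?ct \<le> real (x + y) * F1 ?c ?h ?ct"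
  proof (cases "(1 - e) * real m \<le> real ?h \<or> R0 \<le> (n - ?ct) - ?h")
    case True
    have "real x * F1 (?c + 1) (?h + 1) (?ct - 1) = 0"
    proof (cases "x = 0")
      case False
      then have "Tset st \<noteq> {}" by (auto simp: x_def)
      then have "?ct \<ge> 1" using ct card_0_eq by fastforce
      then show ?thesis using True ct unfolding F1_def by auto
    qed simp
    moreover have "F1 (?c + 1) ?h ?ct = 0" using True unfolding F1_def by auto
    moreover have "F1 ?c ?h ?ct = 0" using True unfolding F1_def by auto
    ultimately show ?thesis by (metis add.right_neutral mult_zero_right order_refl)
  next
    case False
    have "F1 (?c + 1) (?h + 1) (?ct - 1) \<le> exp (e/4 * real (?c + 1) - real (?h + 1))" by (rule F1_le)
    also have "\<dots> = exp (e/4 * (real ?c + 1) - real ?h - 1)" by (simp add: algebra_simps)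
    finally have hit: "real x * F1 (?c + 1) (?h + 1) (?ct - 1) \<le> real x * exp (e/4 * (real ?c + 1) - real ?h - 1)"
      by (intro mult_left_mono) auto
    have miss: "F1 (?c + 1) ?h ?ct = exp (e/4 * (real ?c + 1) - real ?h)"
      using False unfolding F1_def by auto
    have pre: "F1 ?c ?h ?ct = exp (e/4 * real ?c - real ?h)"
      using False unfolding F1_def by auto
    have "real (n - ?ct) < (1 - e/2) * real m"
    proof -
      have "n - ?ct - ?h < R0" using False by auto
      then have a: "real (n - ?ct) < real R0 + real ?h" by linarith
      have b: "real ?h < (1 - e) * real m" using False by linarith
      show ?thesis using a b R0le by (simp add: algebra_simps)
    qed
    then have "real y < (1 - e/2) * real m" using ytau by linarith
    also have "\<dots> \<le> (1 - e/2) * real (x + y)" using Am e8 by (intro mult_left_mono) auto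
    finally have xe: "e / 2 * (real x + real y) \<le> real x" by (simp add: algebra_simps)
    have key: "real x * exp (e/4 * (real ?c + 1) - 1) + real y * exp (e/4 * (real ?c + 1))
        \<le> (real x + real y) * exp (e/4 * real ?c)"
      using phi_ineq[OF _ _ e0 _ xe, of "real ?c"] e8 by simp
    have m1: "exp (e/4 * (real ?c + 1) - real ?h - 1) = exp (e/4 * (real ?c + 1) - 1) * exp (- real ?h)"
      by (simp add: exp_add[symmetric] algebra_simps)
    have m2: "exp (e/4 * (real ?c + 1) - real ?h) = exp (e/4 * (real ?c + 1)) * exp (- real ?h)"
      by (simp add: exp_add[symmetric] algebra_simps)
    have m3: "exp (e/4 * real ?c - real ?h) = exp (e/4 * real ?c) * exp (- real ?h)"
      by (simp add: exp_add[symmetric] algebra_simps)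
    have "real x * F1 (?c + 1) (?h + 1) (?ct - 1) + real y * F1 (?c + 1) ?h ?ct
       \<le> real x * exp (e/4 * (real ?c + 1) - real ?h - 1) + real y * exp (e/4 * (real ?c + 1) - real ?h)"
      using hit miss by simp
    also have "\<dots> = (real x * exp (e/4 * (real ?c + 1) - 1) + real y * exp (e/4 * (real ?c + 1))) * exp (- real ?h)"
      unfolding m1 m2 by (simp add: ring_distribs)
    also have "\<dots> \<le> (real x + real y) * exp (e/4 * real ?c) * exp (- real ?h)"
      using key by (intro mult_right_mono) auto
    also have "\<dots> = real (x + y) * F1 ?c ?h ?ct"
      unfolding pre m3 by simp
    finally show ?thesis .
  qed
  then show "real (card ({v. E u v} \<inter> Tset st)) * F1 (?c + 1) (?h + 1) (?ct - 1)
        + real (card ({v. E u v} - Tset st)) * F1 (?c + 1) ?h ?ct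
        \<le> real (card {v. E u v}) * F1 ?c ?h ?ct"
    unfolding x_def y_def xy[symmetric] .
qed


lemma Cst_nn: "0 \<le> Cst" by (simp add: Cst_def)

lemma F2_nn: "0 \<le> F2 a b c" by (simp add: F2_def Cst_nn)

lemma F2_super:
  assumes I: "inv n k t st"
  shows "(\<integral>\<^sup>+x. ennreal (F2 (tot x) (hits x) (card (Tset x))) \<partial>dfs_step E k t r st)
         \<le> ennreal (F2 (tot st) (hits st) (card (Tset st)))"
proof (rule step_super[OF I F2_nn])
  have ct: "finite (Tset st)" "card (Tset st) \<le> n" "hits st \<le> n - card (Tset st)"
    using inv_cardT[OF I] by auto
  let ?c = "tot st" and ?h = "hits st" and ?ct = "card (Tset st)"
  show "F2 ?c ?h (?ct - 1) \<le> F2 ?c ?h ?ct"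
    if tl: "tot st < t" and U: "Ustack st = []" and ne: "Tset st \<noteq> {}"
  proof -
    have c1: "?ct \<ge> 1" using ne ct card_0_eq by fastforce
    have tS: "n - ?ct \<le> card (Sset st)" using inv_tauS[OF I U] .
    have kS: "k * card (Sset st) \<le> ?c" using inv_kS[OF I] .
    have kt: "real k * real (n - ?ct) \<le> real ?c"
    proof -
      have "k * (n - ?ct) \<le> ?c" using tS kS by (meson le_trans mult_le_mono2)
      then show ?thesis by (metis of_nat_le_iff of_nat_mult)
    qed
    have ce: "real ?c < e * real k * real m" using tot_lt[OF tl] .
    have tau_lt: "real (n - ?ct) < e * real m"
    proof -
      have "real k * real (n - ?ct) < real k * (e * real m)" using kt ce by (simp add: algebra_simps)
      then show ?thesis using k3 by (simp add: mult_less_cancel_left_pos)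
    qed
    have em: "e * real m \<le> real m / 8" using e8 mult_right_mono[OF e8, of "real m"] by simp
    have four: "4 * (n - ?ct) \<le> m" using tau_lt em by linarith
    have four': "4 * (n - (?ct - 1)) \<le> m"
    proof -
      have "real (n - (?ct - 1)) = real (n - ?ct) + 1" using c1 ct by simp
      then have "4 * real (n - (?ct - 1)) \<le> real m" using tau_lt em m8 by linarith
      then show ?thesis by linarith
    qed
    have eqn: "n - (?ct - 1) - ?h = (n - ?ct - ?h) + 1" using c1 ct by simp
    show ?thesis
    proof (cases "R0 \<le> n - ?ct - ?h")
      case True
      have "R0 \<le> n - (?ct - 1) - ?h" using eqn True by simp
      then show ?thesis unfolding F2_def using True by (simp only: if_True)
    next
      case False
      note F = False
      show ?thesis
      proof (cases "R0 \<le> n - (?ct - 1) - ?h")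
        case True
        then have R: "n - ?ct - ?h = R0 - 1" using eqn F by simp
        have "real (k - 2) * real (R0 - 1) \<le> real ?c - 2 * real ?h"
        proof -
          have a: "real (R0 - 1) \<le> real (n - ?ct)" using R by simp
          have b: "real ?h \<le> real (n - ?ct)" using ct by simp
          have "real (k - 2) * real (R0 - 1) \<le> real (k - 2) * real (n - ?ct)"
            using a by (intro mult_left_mono) auto
          also have "\<dots> = real k * real (n - ?ct) - 2 * real (n - ?ct)" using k3 by (simp add: algebra_simps)
          also have "\<dots> \<le> real ?c - 2 * real ?h" using kt b by linarith
          finally show ?thesis .
        qed
        then have "Cst \<le> 2 powr (real ?c - 2 * real ?h)" unfolding Cst_def by simp
        then show ?thesis unfolding F2_def using True F four by simp
      next
        case False
        then show ?thesis unfolding F2_def using F four four' by simp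
      qed
    qed
  qed
  fix u us assume tl: "tot st < t" and U: "Ustack st = u # us" and nk: "nch st u < k"
  have un: "u < n" using I U unfolding inv_def by auto
  define x where "x = card ({v. E u v} \<inter> Tset st)"
  define y where "y = card ({v. E u v} - Tset st)"
  have xy: "x + y = card {v. E u v}" using split_card by (simp add: x_def y_def)
  have ytau: "y \<le> n - card (Tset st)" using inv_miss[OF I] by (simp add: y_def)
  have Am: "m \<le> x + y" using xy mdeg[OF un] by simp
  have xpos: "x > 0 \<Longrightarrow> ?ct \<ge> 1"
  proof -
    assume "x > 0"
    then have "Tset st \<noteq> {}" by (auto simp: x_def)
    then show "?ct \<ge> 1" using ct card_0_eq by fastforce
  qed
  have goal: "real x * F2 (?c + 1) (?h + 1) (?ct - 1) + real y * F2 (?c + 1) ?h ?ct \<le> real (x + y) * F2 ?c ?h ?ct"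
  proof (cases "R0 \<le> n - ?ct - ?h")
    case True
    have h1: "real x * F2 (?c + 1) (?h + 1) (?ct - 1) = real x * Cst"
    proof (cases "x = 0")
      case False
      then have "?ct \<ge> 1" using xpos by simp
      then have "n - (?ct - 1) - (?h + 1) = n - ?ct - ?h" using ct by simp
      then show ?thesis using True unfolding F2_def by simp
    qed simp
    have h2: "F2 (?c + 1) ?h ?ct = Cst" and h3: "F2 ?c ?h ?ct = Cst" using True unfolding F2_def by auto
    show ?thesis unfolding h1 h2 h3 by (simp add: algebra_simps)
  next
    case R: False
    show ?thesis
    proof (cases "4 * (n - ?ct) \<le> m")
      case False
      have "real x * F2 (?c + 1) (?h + 1) (?ct - 1) = 0"
      proof (cases "x = 0")
        case False
        then have "?ct \<ge> 1" using xpos by simp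
        then have "n - (?ct - 1) - (?h + 1) = n - ?ct - ?h" "n - (?ct - 1) = n - ?ct + 1" using ct by auto
        then show ?thesis using R \<open>\<not> 4 * (n - ?ct) \<le> m\<close> unfolding F2_def by simp
      qed simp
      moreover have "F2 (?c + 1) ?h ?ct = 0" "F2 ?c ?h ?ct = 0" using R False unfolding F2_def by auto
      ultimately show ?thesis by (metis add.right_neutral mult_zero_right order_refl)
    next
      case True
      have hit: "real x * F2 (?c + 1) (?h + 1) (?ct - 1) \<le> real x * 2 powr ((real ?c - 2 * real ?h) - 1)"
      proof (cases "x = 0")
        case False
        then have "?ct \<ge> 1" using xpos by simp
        then have "n - (?ct - 1) - (?h + 1) = n - ?ct - ?h" using ct by auto
        then have "F2 (?c + 1) (?h + 1) (?ct - 1) \<le> 2 powr (real (?c + 1) - 2 * real (?h + 1))"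
          using R unfolding F2_def by simp
        also have "\<dots> = 2 powr ((real ?c - 2 * real ?h) - 1)" by (simp add: algebra_simps)
        finally show ?thesis by (intro mult_left_mono) auto
      qed simp
      have miss: "F2 (?c + 1) ?h ?ct = 2 powr ((real ?c - 2 * real ?h) + 1)"
        using R True unfolding F2_def by (simp add: algebra_simps)
      have pre: "F2 ?c ?h ?ct = 2 powr (real ?c - 2 * real ?h)"
        using R True unfolding F2_def by simp
      have "4 * real y \<le> real x + real y"
      proof -
        have "4 * y \<le> m" using ytau True by linarith
        then show ?thesis using Am by linarith
      qed
      from psi_ineq[OF _ _ this, of "real ?c - 2 * real ?h"]
      have "real x * 2 powr ((real ?c - 2 * real ?h) - 1) + real y * 2 powr ((real ?c - 2 * real ?h) + 1)
            \<le> (real x + real y) * 2 powr (real ?c - 2 * real ?h)" by simp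
      then show ?thesis using hit miss pre by simp
    qed
  qed
  then show "real (card ({v. E u v} \<inter> Tset st)) * F2 (?c + 1) (?h + 1) (?ct - 1)
        + real (card ({v. E u v} - Tset st)) * F2 (?c + 1) ?h ?ct
        \<le> real (card {v. E u v}) * F2 ?c ?h ?ct"
    unfolding x_def y_def xy[symmetric] .
qed


lemma run_expect:
  assumes "\<And>st. inv n k t st \<Longrightarrow> (\<integral>\<^sup>+x. f x \<partial>dfs_step E k t r st) \<le> f st"
  shows "(\<integral>\<^sup>+x. f x \<partial>dfs_run E n k t r N) \<le> f (dfs_init n)"
proof -
  have "(\<integral>\<^sup>+x. f x \<partial>(((\<lambda>p. bind_pmf p (dfs_step E k t r)) ^^ N) (return_pmf (dfs_init n))))
        \<le> (\<integral>\<^sup>+x. f x \<partial>return_pmf (dfs_init n))"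
  proof (rule iter_super)
    fix j st assume "st \<in> set_pmf (((\<lambda>p. bind_pmf p (dfs_step E k t r)) ^^ j) (return_pmf (dfs_init n)))"
    then have "inv n k t st" using run_support[of st j] unfolding dfs_run_def by auto
    then show "(\<integral>\<^sup>+x. f x \<partial>dfs_step E k t r st) \<le> f st" by (rule assms)
  qed
  then show ?thesis unfolding dfs_run_def by simp
qed

lemma markov_real:
  fixes g :: "dfs_state \<Rightarrow> real"
  fixes p :: "dfs_state pmf"
  assumes nn: "\<And>x. 0 \<le> g x" and C: "0 < C"
    and ex: "(\<integral>\<^sup>+x. ennreal (g x) \<partial>p) \<le> 1"
  shows "measure_pmf.prob p {x. C \<le> g x} \<le> 1 / C"
proof -
  have "emeasure (measure_pmf p) {x. ennreal C \<le> ennreal (g x)} \<le> (\<integral>\<^sup>+x. ennreal (g x) \<partial>p) / ennreal C"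
    using C by (intro pmf_markov) auto
  also have "\<dots> \<le> 1 / ennreal C" using ex by (rule divide_right_mono_ennreal)
  also have "\<dots> = ennreal (1 / C)" using C by (simp add: divide_ennreal[symmetric])
  finally have a: "emeasure (measure_pmf p) {x. ennreal C \<le> ennreal (g x)} \<le> ennreal (1 / C)" .
  have "{x. C \<le> g x} = {x. ennreal C \<le> ennreal (g x)}" using nn by (auto simp: ennreal_le_iff)
  then have "emeasure (measure_pmf p) {x. C \<le> g x} \<le> ennreal (1 / C)" using a by simp
  then show ?thesis using C by (simp add: measure_pmf.emeasure_eq_measure ennreal_le_iff)
qed

lemma run_bound:
  assumes n0: "0 < n"
  shows "measure_pmf.prob (dfs_run E n k t r (t + 2 * n + 1)) {st. (1 - e) * real m \<le> real (hits st)}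
         \<ge> 1 - (1 / Cst + 1 / exp (real m))"
proof -
  let ?p = "dfs_run E n k t r (t + 2 * n + 1)"
  let ?f1 = "\<lambda>x. F1 (tot x) (hits x) (card (Tset x))"
  let ?f2 = "\<lambda>x. F2 (tot x) (hits x) (card (Tset x))"
  have Cpos: "1 \<le> Cst" unfolding Cst_def by (intro ge_one_powr_ge_zero) auto
  have "0 < (1 - e) * real m" using e8 m8 by (intro mult_pos_pos) auto
  then have i1: "F1 0 0 n = 1" using R0pos unfolding F1_def by auto
  have i2: "F2 0 0 n = 1" using R0pos unfolding F2_def by auto
  have e1: "(\<integral>\<^sup>+x. ennreal (?f1 x) \<partial>?p) \<le> 1"
    using run_expect[of "\<lambda>x. ennreal (?f1 x)", OF F1_super] i1 by (simp add: dfs_init_def)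
  have e2: "(\<integral>\<^sup>+x. ennreal (?f2 x) \<partial>?p) \<le> 1"
    using run_expect[of "\<lambda>x. ennreal (?f2 x)", OF F2_super] i2 by (simp add: dfs_init_def)
  have P1: "measure_pmf.prob ?p {x. exp (real m) \<le> ?f1 x} \<le> 1 / exp (real m)"
    by (rule markov_real[OF F1_nn _ e1]) simp
  have P2: "measure_pmf.prob ?p {x. Cst \<le> ?f2 x} \<le> 1 / Cst"
    using Cpos by (intro markov_real[OF F2_nn _ e2]) simp
  have nm: "m + 1 \<le> n"
  proof -
    have "{v. E 0 v} \<subseteq> {..<n} - {0}" using graph unfolding simple_graph_on_def by auto
    then have "card {v. E 0 v} \<le> card ({..<n} - {0})" by (intro card_mono) auto
    then have "card {v. E 0 v} \<le> n - 1" using n0 by simp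
    then show ?thesis using mdeg[OF n0] n0 by linarith
  qed
  have bad: "{st. \<not> (1 - e) * real m \<le> real (hits st)} \<inter> set_pmf ?p
      \<subseteq> {x. exp (real m) \<le> ?f1 x} \<union> {x. Cst \<le> ?f2 x}"
  proof
    fix st assume "st \<in> {st. \<not> (1 - e) * real m \<le> real (hits st)} \<inter> set_pmf ?p"
    then have h: "real (hits st) < (1 - e) * real m" and mem: "st \<in> set_pmf ?p" by auto
    from run_final[OF mem] have I: "inv n k t st" and T: "term_st t st" by auto
    have ct: "finite (Tset st)" "card (Tset st) \<le> n" "hits st \<le> n - card (Tset st)"
      using inv_cardT[OF I] by auto
    show "st \<in> {x. exp (real m) \<le> ?f1 x} \<union> {x. Cst \<le> ?f2 x}"
    proof (cases "R0 \<le> n - card (Tset st) - hits st")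
      case True
      then have "?f2 st = Cst" unfolding F2_def by simp
      then show ?thesis by simp
    next
      case R: False
      have "t \<le> tot st"
      proof (rule ccontr)
        assume "\<not> t \<le> tot st"
        then have "Tset st = {}" using T unfolding term_st_def by auto
        then have "n - hits st < R0" using R by simp
        then have "real n < real R0 + real (hits st)" by linarith
        moreover have "(1 - e) * real m = real m - e * real m" by (simp add: algebra_simps)
        moreover have "real m + 1 \<le> real n" using nm by linarith
        ultimately show False using h R0le by linarith
      qed
      then have tt: "tot st = t" using I unfolding inv_def by auto
      have "e * real k * real m \<le> real t" unfolding tdef by linarith
      then have "e/4 * (e * real k * real m) \<le> e/4 * real (tot st)" using tt e0 by (intro mult_left_mono) auto
      moreover have "2 * real m \<le> e/4 * (e * real k * real m)"
      proof -
        have "2 * real m = (8 / 4) * real m" by simp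
        also have "\<dots> \<le> (e * e * real k / 4) * real m" using ek by (intro mult_right_mono) auto
        finally show ?thesis by (simp add: algebra_simps)
      qed
      moreover have "real (hits st) \<le> real m"
      proof -
        have "(1 - e) * real m = real m - e * real m" by (simp add: algebra_simps)
        moreover have "0 \<le> e * real m" using e0 by simp
        ultimately show ?thesis using h by linarith
      qed
      ultimately have "real m \<le> e/4 * real (tot st) - real (hits st)" by linarith
      then have "exp (real m) \<le> exp (e/4 * real (tot st) - real (hits st))" by simp
      moreover have "?f1 st = exp (e/4 * real (tot st) - real (hits st))"
        using h R unfolding F1_def by auto
      ultimately show ?thesis by simp
    qed
  qed
  have "measure_pmf.prob ?p {st. \<not> (1 - e) * real m \<le> real (hits st)}
      = measure_pmf.prob ?p ({st. \<not> (1 - e) * real m \<le> real (hits st)} \<inter> set_pmf ?p)"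
    by (simp add: measure_Int_set_pmf)
  also have "\<dots> \<le> measure_pmf.prob ?p ({x. exp (real m) \<le> ?f1 x} \<union> {x. Cst \<le> ?f2 x})"
    using bad by (intro measure_pmf.finite_measure_mono) auto
  also have "\<dots> \<le> measure_pmf.prob ?p {x. exp (real m) \<le> ?f1 x} + measure_pmf.prob ?p {x. Cst \<le> ?f2 x}"
    by (rule measure_Un_le) auto
  also have "\<dots> \<le> 1 / Cst + 1 / exp (real m)" using P1 P2 by simp
  finally have b: "measure_pmf.prob ?p {st. \<not> (1 - e) * real m \<le> real (hits st)} \<le> 1 / Cst + 1 / exp (real m)" .
  have U: "{st. (1 - e) * real m \<le> real (hits st)} \<union> {st. \<not> (1 - e) * real m \<le> real (hits st)} = UNIV"
    by blast
  have "1 = measure_pmf.prob ?p ({st. (1 - e) * real m \<le> real (hits st)} \<union> {st. \<not> (1 - e) * real m \<le> real (hits st)})"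
    unfolding U by simp
  also have "\<dots> \<le> measure_pmf.prob ?p {st. (1 - e) * real m \<le> real (hits st)} + measure_pmf.prob ?p {st. \<not> (1 - e) * real m \<le> real (hits st)}"
    by (rule measure_Un_le) auto
  finally show ?thesis using b by linarith
qed

end



lemma lim_exp: "0 < (c::real) \<Longrightarrow> ((\<lambda>x::real. exp (- (c * x))) \<longlongrightarrow> 0) at_top"
proof -
  assume c: "0 < c"
  have "filterlim (\<lambda>x::real. c * x) at_top at_top"
    using c by (intro filterlim_tendsto_pos_mult_at_top[OF tendsto_const] filterlim_ident) auto
  then have "filterlim (\<lambda>x::real. - (c * x)) at_bot at_top"
    by (simp add: filterlim_uminus_at_top[symmetric])
  from filterlim_compose[OF exp_at_bot this] show ?thesis by simp
qed

lemma lim_aux: "0 < (e::real) \<Longrightarrow> ((\<lambda>x::real. 4 * 2 powr (- (e / 2 * x)) + exp (- x)) \<longlongrightarrow> 0) at_top"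
proof -
  assume e: "0 < e"
  have eq: "\<And>x::real. 2 powr (- (e / 2 * x)) = exp (- ((e / 2 * ln 2) * x))"
    by (simp add: powr_def algebra_simps)
  have c: "((\<lambda>x::real. 2 powr (- (e / 2 * x))) \<longlongrightarrow> 0) at_top"
    unfolding eq using e by (intro lim_exp) simp
  have d: "((\<lambda>x::real. exp (- x)) \<longlongrightarrow> 0) at_top" using lim_exp[of 1] by simp
  show ?thesis using tendsto_add[OF tendsto_mult[OF tendsto_const c] d] by simp
qed

lemma bound_n:
  fixes E :: "nat \<Rightarrow> nat \<Rightarrow> bool" and n k m :: nat and e :: real and r :: "dfs_state \<Rightarrow> nat"
  assumes graph: "simple_graph_on n E" and rr: "\<And>st. Tset st \<noteq> {} \<Longrightarrow> r st \<in> Tset st"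
    and n0: "0 < n" and mdeg: "\<And>u. u < n \<Longrightarrow> m \<le> card {v. E u v}"
    and m8: "8 \<le> m" and e0: "0 < e" and e8: "e \<le> 1/8" and em: "4 \<le> e * real m"
    and k3: "3 \<le> k" and ek: "8 \<le> e * e * real k"
  shows "measure_pmf.prob (dfs_run E n k (nat \<lceil>e * real k * real m\<rceil>) r (nat \<lceil>e * real k * real m\<rceil> + 2 * n + 1))
           {st. (1 - e) * real m \<le> real (hits st)}
         \<ge> 1 - (4 * 2 powr (- (e / 2 * real m)) + exp (- real m))"
proof -
  define t where "t = nat \<lceil>e * real k * real m\<rceil>"
  define R0 where "R0 = nat \<lfloor>e * real m / 2\<rfloor>"
  have R0a: "real R0 \<le> e * real m / 2" unfolding R0_def using em by linarith
  have R0b: "e * real m / 2 - 1 < real R0" unfolding R0_def using em by linarith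
  have R0pos: "1 \<le> R0" using R0b em by linarith
  interpret D: dfs2 n E k t r m e R0
  proof
    show "simple_graph_on n E" by (rule graph)
    show "\<And>u. u < n \<Longrightarrow> {v. E u v} \<noteq> {}"
    proof -
      fix u assume "u < n"
      then have "m \<le> card {v. E u v}" by (rule mdeg)
      then have "card {v. E u v} \<noteq> 0" using m8 by linarith
      then show "{v. E u v} \<noteq> {}" by (metis card.empty)
    qed
  qed (use rr mdeg m8 e0 e8 k3 ek R0pos R0a in \<open>auto simp: t_def\<close>)
  have main: "measure_pmf.prob (dfs_run E n k t r (t + 2 * n + 1)) {st. (1 - e) * real m \<le> real (hits st)}
         \<ge> 1 - (1 / D.Cst + 1 / exp (real m))"
    by (rule D.run_bound[OF n0])
  have "2 powr (e * real m / 2 - 2) \<le> 2 powr (real (R0 - 1))"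
    using R0b R0pos by (intro powr_mono) auto
  also have "\<dots> \<le> D.Cst" unfolding D.Cst_def
  proof (intro powr_mono)
    have "real (k - 2) \<ge> 1" using k3 by linarith
    then show "real (R0 - 1) \<le> real (k - 2) * real (R0 - 1)"
      using mult_right_mono[of 1 "real (k - 2)" "real (R0 - 1)"] by simp
  qed simp
  finally have C: "2 powr (e * real m / 2 - 2) \<le> D.Cst" .
  have "1 / D.Cst \<le> 1 / 2 powr (e * real m / 2 - 2)"
    using C by (intro divide_left_mono mult_pos_pos) (auto intro: less_le_trans[OF _ C])
  also have "\<dots> = 4 * 2 powr (- (e / 2 * real m))"
  proof -
    have h1: "2 powr (e * real m / 2 - 2) = 2 powr (e * real m / 2) / 4"
      by (simp add: powr_diff)
    have h2: "2 powr (- (e / 2 * real m)) = 1 / 2 powr (e * real m / 2)"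
      by (simp add: powr_minus_divide)
    show ?thesis unfolding h1 h2 by simp
  qed
  finally have C': "1 / D.Cst \<le> 4 * 2 powr (- (e / 2 * real m))" .
  have "1 / exp (real m) = exp (- real m)" by (simp add: exp_minus divide_inverse)
  then show ?thesis using main C' unfolding t_def by linarith
qed


theorem lemma10:
  "\<exists>\<epsilon>0>0. \<forall>\<epsilon>::real. 0 < \<epsilon> \<and> \<epsilon> < \<epsilon>0 \<longrightarrow>
     (\<exists>K::nat. \<forall>k\<ge>K.
        \<forall>(G :: nat \<Rightarrow> nat \<Rightarrow> nat \<Rightarrow> bool) (r :: nat \<Rightarrow> dfs_state \<Rightarrow> nat).
          (\<forall>n. simple_graph_on n (G n)) \<longrightarrow>
          filterlim (\<lambda>n. min_degree (G n) n) at_top sequentially \<longrightarrow>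
          (\<forall>n st. Tset st \<noteq> {} \<longrightarrow> r n st \<in> Tset st) \<longrightarrow>
          ((\<lambda>n. let m = min_degree (G n) n;
                    t = nat \<lceil>\<epsilon> * real k * real m\<rceil>
                in measure_pmf.prob (dfs_run (G n) n k t (r n) (t + 2 * n + 1))
                     {st. (1 - \<epsilon>) * real m \<le> real (hits st)})
           \<longlonglongrightarrow> 1))"
proof (intro exI[of _ "1/8"] conjI allI impI)
  show "(0::real) < 1/8" by simp
  fix e :: real assume e: "0 < e \<and> e < 1/8"
  then have e0: "0 < e" and e8: "e \<le> 1/8" by auto
  show "\<exists>K::nat. \<forall>k\<ge>K.
        \<forall>(G :: nat \<Rightarrow> nat \<Rightarrow> nat \<Rightarrow> bool) (r :: nat \<Rightarrow> dfs_state \<Rightarrow> nat).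
          (\<forall>n. simple_graph_on n (G n)) \<longrightarrow>
          filterlim (\<lambda>n. min_degree (G n) n) at_top sequentially \<longrightarrow>
          (\<forall>n st. Tset st \<noteq> {} \<longrightarrow> r n st \<in> Tset st) \<longrightarrow>
          ((\<lambda>n. let m = min_degree (G n) n;
                    t = nat \<lceil>e * real k * real m\<rceil>
                in measure_pmf.prob (dfs_run (G n) n k t (r n) (t + 2 * n + 1))
                     {st. (1 - e) * real m \<le> real (hits st)})
           \<longlonglongrightarrow> 1)"
  proof (intro exI[of _ "nat \<lceil>8 / (e * e)\<rceil> + 3"] allI impI)
    fix k :: nat and G :: "nat \<Rightarrow> nat \<Rightarrow> nat \<Rightarrow> bool" and r :: "nat \<Rightarrow> dfs_state \<Rightarrow> nat"
    assume kK: "nat \<lceil>8 / (e * e)\<rceil> + 3 \<le> k"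
      and gr: "\<forall>n. simple_graph_on n (G n)"
      and lim: "filterlim (\<lambda>n. min_degree (G n) n) at_top sequentially"
      and rr: "\<forall>n st. Tset st \<noteq> {} \<longrightarrow> r n st \<in> Tset st"
    have k3: "3 \<le> k" using kK by linarith
    have ek: "8 \<le> e * e * real k"
    proof -
      have "8 / (e * e) \<le> real k" using kK by linarith
      then have "8 / (e * e) * (e * e) \<le> real k * (e * e)" using e0 by (intro mult_right_mono) auto
      then show ?thesis using e0 by (simp add: algebra_simps)
    qed
    define M where "M = (\<lambda>n. min_degree (G n) n)"
    define a where "a = (\<lambda>n. let m = min_degree (G n) n;
                    t = nat \<lceil>e * real k * real m\<rceil>
                in measure_pmf.prob (dfs_run (G n) n k t (r n) (t + 2 * n + 1))
                     {st. (1 - e) * real m \<le> real (hits st)})"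
    define b where "b = (\<lambda>x::real. 4 * 2 powr (- (e / 2 * x)) + exp (- x))"
    have limM: "filterlim (\<lambda>n. real (M n)) at_top sequentially"
      unfolding M_def by (rule filterlim_compose[OF filterlim_real_sequentially lim])
    have limb: "((\<lambda>n. b (real (M n))) \<longlonglongrightarrow> 0)"
      unfolding b_def by (rule filterlim_compose[OF lim_aux[OF e0] limM])
    have low: "((\<lambda>n. 1 - b (real (M n))) \<longlonglongrightarrow> 1)"
      using tendsto_diff[OF tendsto_const limb, of 1] by simp
    have ev1: "eventually (\<lambda>n. nat \<lceil>4 / e\<rceil> + 8 \<le> M n) sequentially"
      using lim unfolding M_def filterlim_at_top by blast
    have ev2: "eventually (\<lambda>n. 0 < n) sequentially" by (rule eventually_gt_at_top)
    have lower: "eventually (\<lambda>n. 1 - b (real (M n)) \<le> a n) sequentially"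
      using ev1 ev2
    proof eventually_elim
      case (elim n)
      have n0: "0 < n" using elim by simp
      have m8: "8 \<le> M n" using elim by linarith
      have em: "4 \<le> e * real (M n)"
      proof -
        have "4 / e \<le> real (M n)" using elim by linarith
        then have "4 / e * e \<le> real (M n) * e" using e0 by (intro mult_right_mono) auto
        then show ?thesis using e0 by (simp add: algebra_simps)
      qed
      have mdeg: "\<And>u. u < n \<Longrightarrow> M n \<le> card {v. G n u v}"
        unfolding M_def min_degree_def by (intro Min_le) auto
      have "1 - b (real (M n)) \<le> measure_pmf.prob (dfs_run (G n) n k (nat \<lceil>e * real k * real (M n)\<rceil>) (r n)
             (nat \<lceil>e * real k * real (M n)\<rceil> + 2 * n + 1)) {st. (1 - e) * real (M n) \<le> real (hits st)}"
        unfolding b_def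
        by (rule bound_n[OF gr[rule_format] _ n0 mdeg m8 e0 e8 em k3 ek]) (use rr in auto)
      then show ?case unfolding a_def M_def Let_def by simp
    qed
    have upper: "eventually (\<lambda>n. a n \<le> 1) sequentially"
      unfolding a_def Let_def by (simp add: measure_pmf.prob_le_1)
    have "a \<longlonglongrightarrow> 1"
      by (rule tendsto_sandwich[OF lower upper low tendsto_const])
    then show "((\<lambda>n. let m = min_degree (G n) n;
                    t = nat \<lceil>e * real k * real m\<rceil>
                in measure_pmf.prob (dfs_run (G n) n k t (r n) (t + 2 * n + 1))
                     {st. (1 - e) * real m \<le> real (hits st)})
           \<longlonglongrightarrow> 1)" unfolding a_def .
  qed
qed


end
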